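(* Let $F\subset\mathbb{R}^2_{\geq}$ be a compact convex polygon with vertices $P_1,\dots,P_n$ ordered clockwise, and let $\tau_1$ be the extremal ray of $L_{\mathbb{Q}_{\geq}}(F)$ with the greater slope. Suppose $\tau_1\cap F=\{P_1\}$. For $i\in\mathbb{N}$, let $V_i$ denote the intersection point of the segments $\overline{(iP_1)(iP_2)}$ and $\overline{((i+1)P_n)((i+1)P_1)}$, whenever these segments intersect. Then there is a line parallel to $\tau_1$ containing every such point $V_i$.
   Context: $\mathbb{N}=\{0,1,2,\dots\}$; $\overline{XY}$ is the closed segment from $X$ to $Y$. For $A\subseteq\mathbb{R}^2_{\geq}$, $L_{\mathbb{Q}_{\geq}}(A)=\{\sum_{i=1}^p q_ia_i\mid p\in\mathbb{N},\ q_i\in\mathbb{Q}_{\geq},\ a_i\in A\}$ and its extremal rays are its two boundary half-lines from the origin. *)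

theory Defs
  imports "HOL-Analysis.Analysis"
begin

type_synonym pt = "real \<times> real"

definition nonneg_quadrant :: "pt set" where
  "nonneg_quadrant = {x. 0 \<le> fst x \<and> 0 \<le> snd x}"

definition cross :: "pt \<Rightarrow> pt \<Rightarrow> real" where
  "cross u v = fst u * snd v - snd u * fst v"

definition cyc :: "nat \<Rightarrow> nat \<Rightarrow> nat" where
  "cyc n i = (if i = n then 1 else i + 1)"

text \<open>P 1, ..., P n are the vertices of a (non-degenerate) convex polygon, listed clockwise:
  for each edge from P i to its successor, all other vertices lie strictly to the right.\<close>
definition convex_polygon_cw :: "nat \<Rightarrow> (nat \<Rightarrow> pt) \<Rightarrow> bool" where
  "convex_polygon_cw n P \<longleftrightarrow> 3 \<le> n \<and>
     (\<forall>i\<in>{1..n}. \<forall>j\<in>{1..n}. j \<noteq> i \<and> j \<noteq> cyc n i \<longrightarrow>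
        cross (P (cyc n i) - P i) (P j - P i) < 0)"

definition LQ :: "pt set \<Rightarrow> pt set" where
  "LQ A = {(\<Sum>i<p. q i *\<^sub>R a i) | (p::nat) (q::nat \<Rightarrow> real) (a::nat \<Rightarrow> pt).
             \<forall>i<p. q i \<in> (\<rat> :: real set) \<and> 0 \<le> q i \<and> a i \<in> A}"

definition ray :: "pt \<Rightarrow> pt set" where
  "ray d = {t *\<^sub>R d | t. 0 \<le> t}"

definition extremal_ray :: "pt set \<Rightarrow> pt set \<Rightarrow> bool" where
  "extremal_ray C R \<longleftrightarrow> (\<exists>d. d \<noteq> 0 \<and> R = ray d) \<and> R \<subseteq> frontier C"

text \<open>For nonzero vectors in the closed first quadrant, x has greater slope than y
  (slope snd/fst, vertical counted as +infinity) iff cross y x > 0.\<close>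
definition greater_slope :: "pt set \<Rightarrow> pt set \<Rightarrow> bool" where
  "greater_slope R S \<longleftrightarrow> (\<forall>x\<in>R. \<forall>y\<in>S. x \<noteq> 0 \<longrightarrow> y \<noteq> 0 \<longrightarrow> cross y x > 0)"

definition parallel_line :: "pt \<Rightarrow> pt set \<Rightarrow> pt set" where
  "parallel_line c R = {c + t *\<^sub>R x | t x. x \<in> R}"

end

theory Submission
  imports Defs
begin

theorem lemma3p2:
  fixes n :: nat and P :: "nat \<Rightarrow> real \<times> real" and F \<tau>1 :: "(real \<times> real) set"
  assumes poly: "convex_polygon_cw n P"
    and F_def: "F = convex hull (P ` {1..n})"
    and F_quad: "F \<subseteq> nonneg_quadrant"
    and tau1_ext: "extremal_ray (LQ F) \<tau>1"
    and tau1_steeper: "\<forall>\<tau>. extremal_ray (LQ F) \<tau> \<and> \<tau> \<noteq> \<tau>1 \<longrightarrow> greater_slope \<tau>1 \<tau>"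
    and tau1_F: "\<tau>1 \<inter> F = {P 1}"
  shows "\<exists>c. \<forall>(i::nat) V.
           closed_segment (real i *\<^sub>R P 1) (real i *\<^sub>R P 2)
             \<inter> closed_segment (real (i + 1) *\<^sub>R P n) (real (i + 1) *\<^sub>R P 1) = {V}
           \<longrightarrow> V \<in> parallel_line c \<tau>1"
proof -
  have P1t: "P 1 \<in> \<tau>1" using tau1_F by blast
  have n3: "3 \<le> n" using poly by (simp add: convex_polygon_cw_def)
  have "\<forall>i\<in>{1..n}. \<forall>j\<in>{1..n}. j \<noteq> i \<and> j \<noteq> cyc n i \<longrightarrow>
        cross (P (cyc n i) - P i) (P j - P i) < 0" using poly by (simp add: convex_polygon_cw_def)
  moreover have "1 \<in> {1..n}" "n \<in> {1..n}" "n \<noteq> 1" "n \<noteq> cyc n 1" using n3 by (auto simp: cyc_def)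
  ultimately have "cross (P (cyc n 1) - P 1) (P n - P 1) < 0" by blast
  hence Dneg: "cross (P 2 - P 1) (P n - P 1) < 0" using n3 by (simp add: cyc_def numeral_2_eq_2)
  define u where "u = P 2 - P 1"
  define w where "w = P 1 - P n"
  define D where "D = cross u w"
  have D0: "D \<noteq> 0" using Dneg unfolding D_def u_def w_def cross_def by (auto simp: algebra_simps)
  define a where "a = cross (P 1) w / D"
  show ?thesis
  proof (intro exI allI impI)
    fix i :: nat and V
    assume h: "closed_segment (real i *\<^sub>R P 1) (real i *\<^sub>R P 2)
             \<inter> closed_segment (real (i + 1) *\<^sub>R P n) (real (i + 1) *\<^sub>R P 1) = {V}"
    hence "V \<in> closed_segment (real i *\<^sub>R P 1) (real i *\<^sub>R P 2)"
      "V \<in> closed_segment (real (i + 1) *\<^sub>R P n) (real (i + 1) *\<^sub>R P 1)" by auto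
    then obtain s r where s: "V = (1 - s) *\<^sub>R (real i *\<^sub>R P 1) + s *\<^sub>R (real i *\<^sub>R P 2)"
      and r: "V = (1 - r) *\<^sub>R (real (i+1) *\<^sub>R P n) + r *\<^sub>R (real (i+1) *\<^sub>R P 1)"
      unfolding closed_segment_def by blast
    have V1: "V = real i *\<^sub>R P 1 + (s * real i) *\<^sub>R u" using s unfolding u_def
      by (simp add: algebra_simps)
    have V2: "V = real (i+1) *\<^sub>R P 1 - ((1 - r) * real (i+1)) *\<^sub>R w" using r unfolding w_def
      by (simp add: algebra_simps)
    have eq: "P 1 = (s * real i) *\<^sub>R u + ((1 - r) * real (i+1)) *\<^sub>R w"
      using V1 V2 by (simp add: algebra_simps)
    have "cross (P 1) w = (s * real i) * D"
      unfolding D_def by (subst eq) (simp add: cross_def algebra_simps)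
    hence "s * real i = a" unfolding a_def using D0 by (simp add: field_simps)
    hence "V = a *\<^sub>R u + real i *\<^sub>R P 1" using V1 by simp
    thus "V \<in> parallel_line (a *\<^sub>R u) \<tau>1"
      unfolding parallel_line_def using P1t by blast
  qed
qed

end
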